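(* Let $X$ be a $k$-step compact nilspace, let $\psi:X\to Y$ and $R:X\to Y'$ be fibrations with $\psi\lesssim R$, let $\phi_k:Z_k(X)\to Z_k(Y)$ be the $k$-th structure morphism of $\psi$, and let $\varphi=\Delta\big(\psi,(R)_{(k-1)}\circ\pi_{k-1,X}\big)$. If $x,y\in X$ satisfy $\varphi(x)=\varphi(y)$, then there is $z\in\ker(\phi_k)$ such that $R(x)=R(y+z)$.
   Context: Compact nilspaces are $k$-step nilspaces with compact metric topology and closed cube sets. $\pi_{k-1,X}:X\to X_{k-1}$ is projection to the $(k-1)$-th characteristic factor; the $k$-th structure group $Z_k(X)$ is a compact abelian group acting freely on $X$ (written $x\mapsto x+z$) whose orbits are the $\pi_{k-1,X}$-fibers. A morphism $\psi$ of $k$-step nilspaces has a $k$-th structure morphism $\phi_k:Z_k(X)\to Z_k(Y)$, a continuous homomorphism with $\psi(x+z)=\psi(x)+\phi_k(z)$. For a morphism $R$, $(R)_{(k-1)}:X_{k-1}\to Y'_{k-1}$ is the morphism with $(R)_{(k-1)}\circ\pi_{k-1,X}=\pi_{k-1,Y'}\circ R$. Fibrations: morphisms mapping each $\pi_n$-fiber onto a $\pi_n$-fiber for all $n$. $\Delta(f,g)(x)=(f(x),g(x))$. $\psi\lesssim R$ means every fiber of $\psi$ is a union of fibers of $R$. *)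

theory Defs
  imports "HOL-Analysis.Analysis"
begin

text \<open>Cubes: a map from the discrete cube {0,1}^n (bool lists of length n) to the space.
  A cube structure assigns to each n the set of n-cubes.\<close>

type_synonym 'a cubes = "nat \<Rightarrow> (bool list \<Rightarrow> 'a) set"

definition vertices :: "nat \<Rightarrow> bool list set" where
  "vertices n = {v. length v = n}"

definition cube_morphism :: "nat \<Rightarrow> nat \<Rightarrow> (bool list \<Rightarrow> bool list) \<Rightarrow> bool" where
  "cube_morphism m n f \<longleftrightarrow> (\<forall>v\<in>vertices m. f v \<in> vertices n) \<and>
     (\<exists>a::nat \<Rightarrow> int. \<exists>B::nat \<Rightarrow> nat \<Rightarrow> int. \<forall>v\<in>vertices m. \<forall>j<n.
        of_bool (f v ! j) = a j + (\<Sum>i<m. B j i * of_bool (v ! i)))"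

definition face0 :: "nat \<Rightarrow> bool list \<Rightarrow> bool list" where
  "face0 i w = take i w @ [False] @ drop i w"

definition is_nilspace :: "'a cubes \<Rightarrow> bool" where
  "is_nilspace C \<longleftrightarrow>
     (\<forall>n c c'. c \<in> C n \<longrightarrow> (\<forall>v\<in>vertices n. c' v = c v) \<longrightarrow> c' \<in> C n) \<and>
     (\<forall>m n f c. cube_morphism m n f \<longrightarrow> c \<in> C n \<longrightarrow> c \<circ> f \<in> C m) \<and>
     (\<forall>c. c \<in> C 1) \<and>
     (\<forall>n\<ge>1. \<forall>c. (\<forall>i<n. c \<circ> face0 i \<in> C (n - 1)) \<longrightarrow>
        (\<exists>c'\<in>C n. \<forall>v\<in>vertices n. v \<noteq> replicate n True \<longrightarrow> c' v = c v))"

definition is_k_step :: "nat \<Rightarrow> 'a cubes \<Rightarrow> bool" where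
  "is_k_step k C \<longleftrightarrow> is_nilspace C \<and>
     (\<forall>c c'. c \<in> C (k+1) \<longrightarrow> c' \<in> C (k+1) \<longrightarrow>
        (\<forall>v\<in>vertices (k+1). v \<noteq> replicate (k+1) True \<longrightarrow> c v = c' v) \<longrightarrow>
        c (replicate (k+1) True) = c' (replicate (k+1) True))"

text \<open>Compact nilspace: compact metric space with closed cube sets (closedness in the
  finite product X^{0,1}^n, expressed sequentially).\<close>
definition is_compact_nilspace :: "('a::metric_space) cubes \<Rightarrow> bool" where
  "is_compact_nilspace C \<longleftrightarrow> is_nilspace C \<and> compact (UNIV :: 'a set) \<and>
     (\<forall>n c s. (\<forall>j. s j \<in> C n) \<longrightarrow> (\<forall>v\<in>vertices n. (\<lambda>j. s j v) \<longlonglongrightarrow> c v) \<longrightarrow> c \<in> C n)"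

definition char_rel :: "'a cubes \<Rightarrow> nat \<Rightarrow> 'a \<Rightarrow> 'a \<Rightarrow> bool" where
  "char_rel C n x y \<longleftrightarrow> (\<exists>c\<in>C (n+1). \<exists>c'\<in>C (n+1).
      c (replicate (n+1) False) = x \<and> c' (replicate (n+1) False) = y \<and>
      (\<forall>v\<in>vertices (n+1). v \<noteq> replicate (n+1) False \<longrightarrow> c v = c' v))"

definition char_proj :: "'a cubes \<Rightarrow> nat \<Rightarrow> 'a \<Rightarrow> 'a set" where
  "char_proj C n x = {y. char_rel C n x y}"

definition nil_morphism :: "('a::topological_space) cubes \<Rightarrow> ('b::topological_space) cubes \<Rightarrow> ('a \<Rightarrow> 'b) \<Rightarrow> bool" where
  "nil_morphism CX CY f \<longleftrightarrow> continuous_on UNIV f \<and> (\<forall>n c. c \<in> CX n \<longrightarrow> f \<circ> c \<in> CY n)"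

definition fibration :: "('a::topological_space) cubes \<Rightarrow> ('b::topological_space) cubes \<Rightarrow> ('a \<Rightarrow> 'b) \<Rightarrow> bool" where
  "fibration CX CY f \<longleftrightarrow> nil_morphism CX CY f \<and>
     (\<forall>n x. f ` char_proj CX n x = char_proj CY n (f x))"

text \<open>The induced map (f)_(n) : X_n \<rightarrow> Y_n on characteristic factors,
  determined by (f)_(n) o pi_n = pi_n o f.\<close>
definition induced_map :: "'a cubes \<Rightarrow> 'b cubes \<Rightarrow> nat \<Rightarrow> ('a \<Rightarrow> 'b) \<Rightarrow> 'a set \<Rightarrow> 'b set" where
  "induced_map CX CY n f \<xi> = char_proj CY n (f (SOME a. char_proj CX n a = \<xi>))"

definition Delta :: "('x \<Rightarrow> 'y) \<Rightarrow> ('x \<Rightarrow> 'z) \<Rightarrow> 'x \<Rightarrow> 'y \<times> 'z" where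
  "Delta f g x = (f x, g x)"

text \<open>The k-th structure group Z_k(X): pairs (x,y) with x ~_(k-1) y, modulo the relation
  (x,y) ~ (x',y') iff the map on {0,1}^k x {0,1} sending (w,0) to y if w = 0 and to x otherwise,
  and (w,1) to y' if w = 0 and to x' otherwise, is a (k+1)-cube.\<close>
definition zpair_rel :: "'a cubes \<Rightarrow> nat \<Rightarrow> 'a \<times> 'a \<Rightarrow> 'a \<times> 'a \<Rightarrow> bool" where
  "zpair_rel C k p q \<longleftrightarrow>
     (\<lambda>v. if v ! k
          then (if \<forall>i<k. \<not> v ! i then snd q else fst q)
          else (if \<forall>i<k. \<not> v ! i then snd p else fst p)) \<in> C (k+1)"

definition struct_pairs :: "'a cubes \<Rightarrow> nat \<Rightarrow> ('a \<times> 'a) set" where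
  "struct_pairs C k = {(x, y). char_rel C (k - 1) x y}"

definition struct_class :: "'a cubes \<Rightarrow> nat \<Rightarrow> 'a \<times> 'a \<Rightarrow> ('a \<times> 'a) set" where
  "struct_class C k p = {q \<in> struct_pairs C k. zpair_rel C k p q}"

definition struct_group :: "'a cubes \<Rightarrow> nat \<Rightarrow> ('a \<times> 'a) set set" where
  "struct_group C k = struct_class C k ` struct_pairs C k"

definition struct_act :: "'a cubes \<Rightarrow> nat \<Rightarrow> ('a \<times> 'a) set \<Rightarrow> 'a \<Rightarrow> 'a" where
  "struct_act C k z x = (THE y. \<exists>p\<in>z. zpair_rel C k p (x, y))"

text \<open>k-th structure morphism phi_k of f: [(a,b)] maps to [(f a, f b)]; its kernel is the set
  of z with phi_k z equal to the zero [(y,y)] of Z_k(Y).\<close>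
definition struct_morphism :: "'a cubes \<Rightarrow> 'b cubes \<Rightarrow> nat \<Rightarrow> ('a \<Rightarrow> 'b) \<Rightarrow> ('a \<times> 'a) set \<Rightarrow> ('b \<times> 'b) set" where
  "struct_morphism CX CY k f z = struct_class CY k (map_prod f f (SOME p. p \<in> z))"

definition struct_kernel :: "'a cubes \<Rightarrow> 'b cubes \<Rightarrow> nat \<Rightarrow> ('a \<Rightarrow> 'b) \<Rightarrow> ('a \<times> 'a) set set" where
  "struct_kernel CX CY k f =
     {z \<in> struct_group CX k. \<exists>y. struct_morphism CX CY k f z = struct_class CY k (y, y)}"

end

theory Submission
  imports Defs
begin

lemma vertices_iff[simp]: "v \<in> vertices n \<longleftrightarrow> length v = n"
  by (simp add: vertices_def)

lemma length_face0[simp]: "i \<le> length w \<Longrightarrow> length (face0 i w) = Suc (length w)"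
  by (simp add: face0_def)

lemma nth_face0:
  assumes "i \<le> length w" "p \<le> length w"
  shows "face0 i w ! p = (if p < i then w ! p else if p = i then False else w ! (p - 1))"
proof -
  have li: "length (take i w) = i" using assms by simp
  show ?thesis
  proof (cases "p < i")
    case True then show ?thesis using li by (simp add: face0_def nth_append)
  next
    case False
    then have "face0 i w ! p = ([False] @ drop i w) ! (p - i)"
      unfolding face0_def using li by (simp add: nth_append)
    also have "\<dots> = (if p = i then False else w ! (p - 1))"
    proof (cases "p = i")
      case True then show ?thesis by simp
    next
      case ne: False
      have pi: "p - i = Suc (p - 1 - i)" using False ne by arith
      have "([False] @ drop i w) ! (p - i) = drop i w ! (p - 1 - i)" by (simp add: pi)
      also have "\<dots> = w ! (i + (p - 1 - i))" using assms by simp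
      also have "i + (p - 1 - i) = p - 1" using False ne by arith
      finally show ?thesis using ne by simp
    qed
    finally show ?thesis using False by simp
  qed
qed

definition rem :: "nat \<Rightarrow> bool list \<Rightarrow> bool list" where
  "rem j u = take j u @ drop (Suc j) u"

lemma length_rem[simp]: "j < length u \<Longrightarrow> length (rem j u) = length u - 1"
  by (simp add: rem_def)

lemma nth_rem:
  assumes "j < length u" "p < length u - 1"
  shows "rem j u ! p = (if p < j then u ! p else u ! Suc p)"
  using assms by (simp add: rem_def nth_append min_def)

lemma sum_delta_mult:
  fixes x :: "nat \<Rightarrow> int"
  assumes "i < m"
  shows "(\<Sum>i'<m. (if i' = i then c else 0) * x i') = c * x i"
proof -
  have "(\<Sum>i'<m. (if i' = i then c else 0) * x i') = (\<Sum>i'<m. if i' = i then c * x i' else 0)"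
    by (rule sum.cong) auto
  also have "\<dots> = c * x i" using assms by (simp add: sum.delta)
  finally show ?thesis .
qed

lemma cube_morphism_lit:
  assumes len: "\<And>v. length v = m \<Longrightarrow> length (f v) = n"
    and coord: "\<And>j. j < n \<Longrightarrow> (\<exists>b. \<forall>v. length v = m \<longrightarrow> f v ! j = b) \<or>
                  (\<exists>i<m. \<exists>s. \<forall>v. length v = m \<longrightarrow> f v ! j = (v ! i \<noteq> s))"
  shows "cube_morphism m n f"
proof -
  have "\<forall>j. \<exists>ab::int \<times> (nat \<Rightarrow> int). j < n \<longrightarrow> (\<forall>v. length v = m \<longrightarrow>
     of_bool (f v ! j) = fst ab + (\<Sum>i<m. snd ab i * of_bool (v ! i)))"
  proof
    fix j
    show "\<exists>ab::int \<times> (nat \<Rightarrow> int). j < n \<longrightarrow> (\<forall>v. length v = m \<longrightarrow>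
     of_bool (f v ! j) = fst ab + (\<Sum>i<m. snd ab i * of_bool (v ! i)))"
    proof (cases "j < n")
      case False thus ?thesis by simp
    next
      case True
      from coord[OF True] show ?thesis
      proof
        assume "\<exists>b. \<forall>v. length v = m \<longrightarrow> f v ! j = b"
        then obtain b where b: "\<forall>v. length v = m \<longrightarrow> f v ! j = b" by blast
        show ?thesis by (rule exI[of _ "(of_bool b, \<lambda>_. 0)"]) (simp add: b)
      next
        assume "\<exists>i<m. \<exists>s. \<forall>v. length v = m \<longrightarrow> f v ! j = (v ! i \<noteq> s)"
        then obtain i s where im: "i < m" and isv: "\<forall>v. length v = m \<longrightarrow> f v ! j = (v ! i \<noteq> s)" by blast
        show ?thesis
          apply (rule exI[of _ "(if s then 1 else 0, \<lambda>i'. if i' = i then (if s then -1 else 1) else 0)"])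
          apply (intro impI allI)
          subgoal for v using isv[rule_format, of v] by (cases s; simp add: sum_delta_mult[OF im])
          done
      qed
    qed
  qed
  then have "\<exists>P::nat \<Rightarrow> int \<times> (nat \<Rightarrow> int). \<forall>j. j < n \<longrightarrow> (\<forall>v. length v = m \<longrightarrow>
     of_bool (f v ! j) = fst (P j) + (\<Sum>i<m. snd (P j) i * of_bool (v ! i)))"
    by (rule choice)
  then obtain P :: "nat \<Rightarrow> int \<times> (nat \<Rightarrow> int)" where P0: "\<forall>j. j < n \<longrightarrow> (\<forall>v. length v = m \<longrightarrow>
     of_bool (f v ! j) = fst (P j) + (\<Sum>i<m. snd (P j) i * of_bool (v ! i)))" ..
  have "\<forall>v\<in>vertices m. \<forall>j<n. of_bool (f v ! j) = fst (P j) + (\<Sum>i<m. snd (P j) i * of_bool (v ! i))"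
  proof (intro ballI allI impI)
    fix v j assume "v \<in> vertices m" "j < n"
    then show "of_bool (f v ! j) = fst (P j) + (\<Sum>i<m. snd (P j) i * of_bool (v ! i))"
      using P0[rule_format, of j v] unfolding vertices_def by simp
  qed
  then have "\<exists>(a::nat\<Rightarrow>int) B. \<forall>v\<in>vertices m. \<forall>j<n. of_bool (f v ! j) = a j + (\<Sum>i<m. B j i * of_bool (v ! i))"
    by (rule exI[of _ "\<lambda>j. fst (P j)", OF exI[of _ "\<lambda>j. snd (P j)"]])
  moreover have "\<forall>v\<in>vertices m. f v \<in> vertices n" using len unfolding vertices_def by blast
  ultimately show ?thesis unfolding cube_morphism_def by blast
qed


lemma lit_var: "i < m \<Longrightarrow> (\<And>v. length v = m \<Longrightarrow> f v ! j = v ! i) \<Longrightarrow>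
   (\<exists>b. \<forall>v. length v = m \<longrightarrow> f v ! j = b) \<or> (\<exists>i<m. \<exists>s. \<forall>v. length v = m \<longrightarrow> f v ! j = (v ! i \<noteq> s))"
  by (intro disjI2 exI[of _ i] conjI exI[of _ False]) auto

lemma lit_neg: "i < m \<Longrightarrow> (\<And>v. length v = m \<Longrightarrow> f v ! j = (\<not> v ! i)) \<Longrightarrow>
   (\<exists>b. \<forall>v. length v = m \<longrightarrow> f v ! j = b) \<or> (\<exists>i<m. \<exists>s. \<forall>v. length v = m \<longrightarrow> f v ! j = (v ! i \<noteq> s))"
  by (intro disjI2 exI[of _ i] conjI exI[of _ True]) auto

lemma lit_const: "(\<And>v. length v = m \<Longrightarrow> f v ! j = b) \<Longrightarrow>
   (\<exists>b. \<forall>v. length v = m \<longrightarrow> f v ! j = b) \<or> (\<exists>i<m. \<exists>s. \<forall>v. length v = m \<longrightarrow> f v ! j = (v ! i \<noteq> s))"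
  by (intro disjI1 exI[of _ b]) auto

lemma mor_face0: assumes "i < n" shows "cube_morphism (n - 1) n (face0 i)"
proof (rule cube_morphism_lit)
  fix v :: "bool list" assume "length v = n - 1" then show "length (face0 i v) = n" using assms by simp
next
  fix j assume j: "j < n"
  show "(\<exists>b. \<forall>v. length v = n - 1 \<longrightarrow> face0 i v ! j = b) \<or> (\<exists>i'<n - 1. \<exists>s. \<forall>v. length v = n - 1 \<longrightarrow> face0 i v ! j = (v ! i' \<noteq> s))"
  proof (cases "j < i")
    case True show ?thesis
      by (rule lit_var[of j]) (use assms j True in \<open>auto simp: nth_face0\<close>)
  next
    case False
    show ?thesis
    proof (cases "j = i")
      case True show ?thesis
        by (rule lit_const[where b=False]) (use assms j True in \<open>auto simp: nth_face0\<close>)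
    next
      case False
      show ?thesis
        by (rule lit_var[of "j - 1"]) (use assms j \<open>\<not> j < i\<close> False in \<open>auto simp: nth_face0\<close>)
    qed
  qed
qed

lemma mor_upd_const: assumes "d < n" shows "cube_morphism n n (\<lambda>v. v[d := b])"
proof (rule cube_morphism_lit)
  fix j assume j: "j < n"
  show "(\<exists>b'. \<forall>v. length v = n \<longrightarrow> v[d := b] ! j = b') \<or> (\<exists>i<n. \<exists>s. \<forall>v. length v = n \<longrightarrow> v[d := b] ! j = (v ! i \<noteq> s))"
  proof (cases "j = d")
    case True show ?thesis by (rule lit_const[where b=b]) (use j assms True in simp)
  next
    case False show ?thesis by (rule lit_var[of j]) (use j assms False in simp_all)
  qed
qed simp

lemma mor_flip: assumes "d < n" shows "cube_morphism n n (\<lambda>v. v[d := \<not> v ! d])"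
proof (rule cube_morphism_lit)
  fix j assume j: "j < n"
  show "(\<exists>b'. \<forall>v. length v = n \<longrightarrow> v[d := \<not> v ! d] ! j = b') \<or> (\<exists>i<n. \<exists>s. \<forall>v. length v = n \<longrightarrow> v[d := \<not> v ! d] ! j = (v ! i \<noteq> s))"
  proof (cases "j = d")
    case True show ?thesis by (rule lit_neg[of d]) (use j assms True in simp_all)
  next
    case False show ?thesis by (rule lit_var[of j]) (use j assms False in simp_all)
  qed
qed simp

lemma mor_take: assumes "k \<le> m" shows "cube_morphism m k (take k)"
proof (rule cube_morphism_lit)
  fix j assume j: "j < k"
  show "(\<exists>b'. \<forall>v. length v = m \<longrightarrow> take k v ! j = b') \<or> (\<exists>i<m. \<exists>s. \<forall>v. length v = m \<longrightarrow> take k v ! j = (v ! i \<noteq> s))"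
    apply (rule disjI2) apply (rule exI[of _ j]) using j assms by auto
qed (use assms in simp)

lemma mor_snoc_neg: assumes "d < n" shows "cube_morphism n (Suc n) (\<lambda>v. v @ [\<not> v ! d])"
proof (rule cube_morphism_lit)
  fix j assume j: "j < Suc n"
  show "(\<exists>b'. \<forall>v. length v = n \<longrightarrow> (v @ [\<not> v ! d]) ! j = b') \<or> (\<exists>i<n. \<exists>s. \<forall>v. length v = n \<longrightarrow> (v @ [\<not> v ! d]) ! j = (v ! i \<noteq> s))"
  proof (cases "j < n")
    case True show ?thesis by (rule lit_var[of j]) (use True in \<open>simp_all add: nth_append\<close>)
  next
    case False then have "j = n" using j by simp
    show ?thesis by (rule lit_neg[of d]) (use assms \<open>j = n\<close> in \<open>simp_all add: nth_append\<close>)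
  qed
qed simp

lemma mor_rho: "cube_morphism (Suc k) (Suc k) (\<lambda>v. map Not (take k v) @ [v ! k])"
proof (rule cube_morphism_lit)
  fix j assume j: "j < Suc k"
  show "(\<exists>b'. \<forall>v. length v = Suc k \<longrightarrow> (map Not (take k v) @ [v ! k]) ! j = b') \<or> (\<exists>i<Suc k. \<exists>s. \<forall>v. length v = Suc k \<longrightarrow> (map Not (take k v) @ [v ! k]) ! j = (v ! i \<noteq> s))"
  proof (cases "j < k")
    case True show ?thesis by (rule lit_neg[of j]) (use True in \<open>simp_all add: nth_append\<close>)
  next
    case False then have "j = k" using j by simp
    show ?thesis by (rule lit_var[of k]) (use \<open>j = k\<close> in \<open>simp_all add: nth_append\<close>)
  qed
qed simp


lemma face0_rem:
  assumes "length v = n" "j < n" "\<not> v ! j"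
  shows "face0 j (rem j v) = v"
proof (rule nth_equalityI)
  show "length (face0 j (rem j v)) = length v" using assms by simp
next
  fix p assume "p < length (face0 j (rem j v))"
  then have p: "p < n" using assms by simp
  show "face0 j (rem j v) ! p = v ! p"
    using assms p by (auto simp: nth_face0 nth_rem)
qed

lemma rem_face0:
  assumes "j \<le> length w"
  shows "rem j (face0 j w) = w"
proof (rule nth_equalityI)
  show "length (rem j (face0 j w)) = length w" using assms by simp
next
  fix p assume "p < length (rem j (face0 j w))"
  then have p: "p < length w" using assms by simp
  show "rem j (face0 j w) ! p = w ! p"
    using assms p by (auto simp: nth_face0 nth_rem)
qed

lemma face0_nth_self: "j \<le> length w \<Longrightarrow> face0 j w ! j = False"
  by (simp add: nth_face0)

definition sh :: "nat \<Rightarrow> nat \<Rightarrow> nat" where "sh j i = (if i < j then i else i - 1)"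

lemma nth_rem_sh:
  assumes "i \<noteq> j" "i < length u" "j < length u"
  shows "rem j u ! sh j i = u ! i"
  using assms by (auto simp: sh_def nth_rem)

lemma ff_nth1:
  assumes "i < j" "j \<le> Suc (length w)" "p < Suc (Suc (length w))"
  shows "face0 j (face0 i w) ! p = (if p < i then w!p else if p = i then False else if p < j then w!(p-1) else if p = j then False else w!(p-1-1))"
proof -
  have il: "i \<le> length w" using assms by simp
  have e: "face0 j (face0 i w) ! p = (if p < j then face0 i w ! p else if p = j then False else face0 i w ! (p - 1))"
    using assms il by (simp add: nth_face0)
  show ?thesis
  proof (cases "p < j")
    case True
    then show ?thesis using e il assms by (simp add: nth_face0)
  next
    case False
    show ?thesis
    proof (cases "p = j")
      case True then show ?thesis using e assms by simp
    next
      case ne: False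
      have e2: "face0 j (face0 i w) ! p = face0 i w ! (p - 1)" using e False ne by simp
      have a1: "\<not> p - 1 < i" "p - 1 \<noteq> i" "p - 1 \<le> length w"
        using assms False ne by arith+
      have "face0 i w ! (p - 1) = (if p - 1 < i then w ! (p - 1) else if p - 1 = i then False else w ! (p - 1 - 1))"
        using il a1(3) by (rule nth_face0)
      also have "\<dots> = w ! (p - 1 - 1)" using a1 by simp
      finally show ?thesis using False ne assms e2 by simp
    qed
  qed
qed

lemma ff_nth2:
  assumes "i < j" "j \<le> Suc (length w)" "p < Suc (Suc (length w))"
  shows "face0 i (face0 (j - 1) w) ! p = (if p < i then w!p else if p = i then False else if p < j then w!(p-1) else if p = j then False else w!(p-1-1))"
proof -
  have jl: "j - 1 \<le> length w" using assms by simp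
  have il: "i \<le> Suc (length w)" using assms by simp
  have e: "face0 i (face0 (j - 1) w) ! p = (if p < i then face0 (j - 1) w ! p else if p = i then False else face0 (j - 1) w ! (p - 1))"
    using assms jl by (simp add: nth_face0)
  show ?thesis
  proof (cases "p < i")
    case True
    have a2: "p < j - 1" "p \<le> length w" using True assms by arith+
    have "face0 (j - 1) w ! p = (if p < j - 1 then w ! p else if p = j - 1 then False else w ! (p - 1))"
      using jl a2(2) by (rule nth_face0)
    then show ?thesis using e True a2 by simp
  next
    case False
    show ?thesis
    proof (cases "p = i")
      case True then show ?thesis using e assms by simp
    next
      case ne: False
      then have "face0 i (face0 (j - 1) w) ! p = face0 (j - 1) w ! (p - 1)" using e False by simp
      also have "\<dots> = (if p - 1 < j - 1 then w ! (p - 1) else if p - 1 = j - 1 then False else w ! (p - 1 - 1))"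
        using jl assms False ne by (simp add: nth_face0)
      finally show ?thesis using False ne assms by auto
    qed
  qed
qed

lemma ff:
  assumes "i < j" "j \<le> Suc (length w)"
  shows "face0 j (face0 i w) = face0 i (face0 (j - 1) w)"
proof (rule nth_equalityI)
  show "length (face0 j (face0 i w)) = length (face0 i (face0 (j - 1) w))"
    using assms by simp
next
  fix p assume "p < length (face0 j (face0 i w))"
  then have p: "p < Suc (Suc (length w))" using assms by simp
  show "face0 j (face0 i w) ! p = face0 i (face0 (j - 1) w) ! p"
    unfolding ff_nth1[OF assms p] ff_nth2[OF assms p] ..
qed

lemma face0_face0:
  assumes "i \<noteq> j" "i < length w + 2" "j < length w + 2"
  shows "face0 j (face0 (sh j i) w) = face0 i (face0 (sh i j) w)"
proof (cases "i < j")
  case True then show ?thesis using assms ff[of i j w] by (simp add: sh_def)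
next
  case False then have "j < i" using assms by simp
  then show ?thesis using assms ff[of j i w] by (simp add: sh_def)
qed


context
  fixes C :: "'a cubes"
  assumes nil: "is_nilspace C"
begin

lemma ax1: "\<forall>n c c'. c \<in> C n \<longrightarrow> (\<forall>v\<in>vertices n. c' v = c v) \<longrightarrow> c' \<in> C n"
  using nil unfolding is_nilspace_def by (rule conjunct1)

lemma ax2: "\<forall>m n f c. cube_morphism m n f \<longrightarrow> c \<in> C n \<longrightarrow> c \<circ> f \<in> C m"
  using nil unfolding is_nilspace_def by (elim conjE)

lemma ax3: "\<forall>c. c \<in> C 1"
  using nil unfolding is_nilspace_def by (elim conjE)

lemma ax4: "\<forall>n\<ge>1. \<forall>c. (\<forall>i<n. c \<circ> face0 i \<in> C (n - 1)) \<longrightarrow>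
        (\<exists>c'\<in>C n. \<forall>v\<in>vertices n. v \<noteq> replicate n True \<longrightarrow> c' v = c v)"
  using nil unfolding is_nilspace_def by (elim conjE)

lemma cube_cong: "c \<in> C n \<Longrightarrow> (\<And>v. length v = n \<Longrightarrow> c' v = c v) \<Longrightarrow> c' \<in> C n"
  using ax1 by simp

lemma cube_comp: "c \<in> C n \<Longrightarrow> cube_morphism m n f \<Longrightarrow> c \<circ> f \<in> C m"
  using ax2 by blast

lemma cube_mor: "c \<in> C n \<Longrightarrow> cube_morphism m n f \<Longrightarrow> (\<And>v. length v = m \<Longrightarrow> g v = c (f v)) \<Longrightarrow> g \<in> C m"
  by (rule cube_cong[OF cube_comp]) auto

lemma cube_C1: "c \<in> C 1"
  using ax3 by blast

lemma cube_const: "(\<lambda>v. x) \<in> C n"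
proof (rule cube_mor[of "\<lambda>v. x" 1 n "\<lambda>v. [False]"])
  show "(\<lambda>v. x) \<in> C 1" by (rule cube_C1)
  show "cube_morphism n 1 (\<lambda>v. [False])"
    by (rule cube_morphism_lit) (auto intro: lit_const)
qed simp

lemma cube_complete:
  assumes "1 \<le> n" "\<forall>i<n. c \<circ> face0 i \<in> C (n - 1)"
  shows "\<exists>c'\<in>C n. \<forall>v. length v = n \<longrightarrow> v \<noteq> replicate n True \<longrightarrow> c' v = c v"
proof -
  have "\<exists>c'\<in>C n. \<forall>v\<in>vertices n. v \<noteq> replicate n True \<longrightarrow> c' v = c v"
    using ax4 assms(1) assms(2) by blast
  then show ?thesis unfolding vertices_def by simp
qed

lemma cube_face: "c \<in> C n \<Longrightarrow> i < n \<Longrightarrow> c \<circ> face0 i \<in> C (n - 1)"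
  by (rule cube_comp[OF _ mor_face0])


lemma ext_lemma:
  shows "I \<subseteq> {..<n} \<Longrightarrow> (\<forall>i\<in>I. f \<circ> face0 i \<in> C (n - 1)) \<Longrightarrow>
    \<exists>c\<in>C n. \<forall>v. length v = n \<longrightarrow> (\<exists>i\<in>I. \<not> v ! i) \<longrightarrow> c v = f v"
proof (induction "n - card I" arbitrary: n I f rule: less_induct)
  case (less n I f)
  have finI: "finite I" using less.prems(1) finite_subset by blast
  show ?case
  proof (cases "I = {..<n}")
    case True
    show ?thesis
    proof (cases "n = 0")
      case True
      then have "I = {}" using \<open>I = {..<n}\<close> by simp
      show ?thesis by (rule bexI[OF _ cube_const]) (simp add: \<open>I = {}\<close>)
    next
      case False
      then have n1: "1 \<le> n" by simp
      have "\<forall>i<n. f \<circ> face0 i \<in> C (n - 1)" using less.prems(2) True by simp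
      then obtain c' where c': "c' \<in> C n" "\<forall>v. length v = n \<longrightarrow> v \<noteq> replicate n True \<longrightarrow> c' v = f v"
        using cube_complete[OF n1] by blast
      show ?thesis
      proof (rule bexI[OF _ c'(1)], intro allI impI)
        fix v assume v: "length v = n" "\<exists>i\<in>I. \<not> v ! i"
        then obtain i where "i \<in> I" "\<not> v ! i" by blast
        then have "v \<noteq> replicate n True" using True by auto
        then show "c' v = f v" using c'(2) v(1) by blast
      qed
    qed
  next
    case False
    then obtain j where j: "j < n" "j \<notin> I" using less.prems(1) by auto
    have Ilt: "card I < n"
    proof -
      have "I \<subset> {..<n}" using less.prems(1) False by blast
      then have "card I < card {..<n}" by (rule psubset_card_mono[rotated]) simp
      then show ?thesis by simp
    qed
    define I' where "I' = sh j ` I"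
    have inj: "inj_on (sh j) I"
    proof (rule inj_onI)
      fix x y assume xy: "x \<in> I" "y \<in> I" "sh j x = sh j y"
      then have "x \<noteq> j" "y \<noteq> j" using j(2) by auto
      then show "x = y" using xy(3) unfolding sh_def by (auto split: if_splits)
    qed
    have cardI': "card I' = card I" unfolding I'_def using inj by (simp add: card_image)
    have I'sub: "I' \<subseteq> {..<n - 1}"
    proof
      fix x assume "x \<in> I'"
      then obtain i where i: "i \<in> I" "x = sh j i" unfolding I'_def by blast
      then have "i < n" "i \<noteq> j" using less.prems(1) j(2) by auto
      then show "x \<in> {..<n - 1}" using i(2) j(1) unfolding sh_def by auto
    qed
    have hyp1: "\<forall>i'\<in>I'. (f \<circ> face0 j) \<circ> face0 i' \<in> C (n - 1 - 1)"
    proof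
      fix i' assume "i' \<in> I'"
      then obtain i where i: "i \<in> I" "i' = sh j i" unfolding I'_def by blast
      have ij: "i \<noteq> j" "i < n" using i(1) j less.prems(1) by auto
      have fi: "f \<circ> face0 i \<in> C (n - 1)" using less.prems(2) i(1) by blast
      have shij: "sh i j < n - 1" using ij j by (auto simp: sh_def)
      show "(f \<circ> face0 j) \<circ> face0 i' \<in> C (n - 1 - 1)"
      proof (rule cube_mor[OF fi mor_face0[OF shij]])
        fix w :: "bool list" assume w: "length w = n - 1 - 1"
        have "i < length w + 2" "j < length w + 2" using w ij j by arith+
        then show "((f \<circ> face0 j) \<circ> face0 i') w = (f \<circ> face0 i) (face0 (sh i j) w)"
          using face0_face0[of i j w] ij i(2) by simp
      qed
    qed
    have m1: "n - 1 - card I' < n - card I" using cardI' Ilt by simp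
    obtain g where g: "g \<in> C (n - 1)" "\<forall>w. length w = n - 1 \<longrightarrow> (\<exists>i\<in>I'. \<not> w ! i) \<longrightarrow> g w = (f \<circ> face0 j) w"
      using less.hyps[OF m1 I'sub hyp1] by blast
    define f1 where "f1 v = (if \<not> v ! j then g (rem j v) else f v)" for v
    have hyp2: "\<forall>i\<in>insert j I. f1 \<circ> face0 i \<in> C (n - 1)"
    proof
      fix i assume "i \<in> insert j I"
      then consider "i = j" | "i \<in> I" "i \<noteq> j" using j(2) by blast
      then show "f1 \<circ> face0 i \<in> C (n - 1)"
      proof cases
        case 1
        show ?thesis
        proof (rule cube_cong[OF g(1)])
          fix w :: "bool list" assume w: "length w = n - 1"
          then have "j \<le> length w" using j by simp
          then show "(f1 \<circ> face0 i) w = g w" using 1 by (simp add: f1_def face0_nth_self rem_face0)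
        qed
      next
        case 2
        have fi: "f \<circ> face0 i \<in> C (n - 1)" using less.prems(2) 2(1) by blast
        show ?thesis
        proof (rule cube_cong[OF fi])
          fix w :: "bool list" assume w: "length w = n - 1"
          have il: "i < n" using 2 less.prems(1) by auto
          define u where "u = face0 i w"
          have lu: "length u = n" using w il unfolding u_def by simp
          have ui: "\<not> u ! i" using w il unfolding u_def by (simp add: face0_nth_self)
          show "(f1 \<circ> face0 i) w = (f \<circ> face0 i) w"
          proof (cases "u ! j")
            case True then show ?thesis by (simp add: f1_def u_def[symmetric])
          next
            case False
            have "rem j u ! sh j i = u ! i" using nth_rem_sh[of i j u] 2(2) il j lu by simp
            then have "\<exists>i'\<in>I'. \<not> rem j u ! i'" using ui 2(1) unfolding I'_def by blast
            moreover have "length (rem j u) = n - 1" using lu j by simp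
            ultimately have "g (rem j u) = f (face0 j (rem j u))" using g(2) by simp
            also have "face0 j (rem j u) = u" using face0_rem[OF lu j(1) False] .
            finally show ?thesis using False by (simp add: f1_def u_def[symmetric])
          qed
        qed
      qed
    qed
    have sub2: "insert j I \<subseteq> {..<n}" using less.prems(1) j by auto
    have m2: "n - card (insert j I) < n - card I" using finI j(2) Ilt by simp
    obtain c where c: "c \<in> C n" "\<forall>v. length v = n \<longrightarrow> (\<exists>i\<in>insert j I. \<not> v ! i) \<longrightarrow> c v = f1 v"
      using less.hyps[OF m2 sub2 hyp2] by blast
    show ?thesis
    proof (rule bexI[OF _ c(1)], intro allI impI)
      fix v assume v: "length v = n" "\<exists>i\<in>I. \<not> v ! i"
      then obtain i where i: "i \<in> I" "\<not> v ! i" by blast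
      have "c v = f1 v" using c(2) v i by blast
      also have "f1 v = f v"
      proof (cases "v ! j")
        case True then show ?thesis by (simp add: f1_def)
      next
        case False
        have il: "i < n" "i \<noteq> j" using i(1) less.prems(1) j(2) by auto
        have "rem j v ! sh j i = v ! i" using nth_rem_sh[of i j v] il j v(1) by simp
        then have "\<exists>i'\<in>I'. \<not> rem j v ! i'" using i unfolding I'_def by blast
        moreover have "length (rem j v) = n - 1" using v(1) j by simp
        ultimately have "g (rem j v) = f (face0 j (rem j v))" using g(2) by simp
        also have "face0 j (rem j v) = v" using face0_rem[OF v(1) j(1) False] .
        finally show ?thesis using False by (simp add: f1_def)
      qed
      finally show "c v = f v" .
    qed
  qed
qed


lemma face0_last: "length w = n \<Longrightarrow> face0 n w = w @ [False]"
  by (simp add: face0_def)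

lemma mor_sigma: assumes d: "d < n" shows "cube_morphism n n (\<lambda>w. (take n (face0 d w))[d := face0 d w ! n])"
proof (rule cube_morphism_lit)
  fix w :: "bool list" assume "length w = n" then show "length ((take n (face0 d w))[d := face0 d w ! n]) = n"
    using d by simp
next
  fix p assume p: "p < n"
  have e: "\<And>w. length w = n \<Longrightarrow> (take n (face0 d w))[d := face0 d w ! n] ! p =
       (if p = d then w ! (n - 1) else if p < d then w ! p else w ! (p - 1))"
    using d p by (auto simp: nth_face0)
  show "(\<exists>b. \<forall>w. length w = n \<longrightarrow> (take n (face0 d w))[d := face0 d w ! n] ! p = b) \<or>
    (\<exists>i<n. \<exists>s. \<forall>w. length w = n \<longrightarrow> (take n (face0 d w))[d := face0 d w ! n] ! p = (w ! i \<noteq> s))"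
  proof (cases "p = d")
    case True
    show ?thesis apply (rule disjI2) apply (rule exI[of _ "n - 1"]) using e True d by auto
  next
    case False
    show ?thesis
    proof (cases "p < d")
      case True
      show ?thesis apply (rule disjI2) apply (rule exI[of _ p]) using e True False p by auto
    next
      case ge: False
      show ?thesis apply (rule disjI2) apply (rule exI[of _ "p - 1"]) using e ge False p by auto
    qed
  qed
qed

lemma glue0:
  assumes F1: "F1 \<in> C n" and F2: "F2 \<in> C n" and d: "d < n"
    and agree: "\<And>v. length v = n \<Longrightarrow> \<not> v ! d \<Longrightarrow> F1 v = F2 v"
  shows "(\<lambda>v. if v ! d then F2 v else F1 (v[d := True])) \<in> C n"
proof -
  define f where "f u = (if \<not> u ! d then F1 ((take n u)[d := u ! n]) else F2 (take n u))" for u :: "bool list"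
  have sub: "{d, n} \<subseteq> {..<Suc n}" using d by auto
  have h0: "\<forall>i\<in>{d, n}. f \<circ> face0 i \<in> C n"
  proof
    fix i assume "i \<in> {d, n}"
    then consider "i = d" | "i = n" by blast
    then show "f \<circ> face0 i \<in> C n"
    proof cases
      case 1
      show ?thesis
      proof (rule cube_mor[OF F1 mor_sigma[OF d]])
        fix w :: "bool list" assume w: "length w = n"
        then have "face0 d w ! d = False" using d by (simp add: face0_nth_self)
        then show "(f \<circ> face0 i) w = F1 ((take n (face0 d w))[d := face0 d w ! n])"
          using 1 by (simp add: f_def)
      qed
    next
      case 2
      show ?thesis
      proof (rule cube_cong[OF F2])
        fix w :: "bool list" assume w: "length w = n"
        then have fw: "face0 n w = w @ [False]" by (simp add: face0_last)
        have wd: "(w @ [False]) ! d = w ! d" using w d by (simp add: nth_append)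
        have wn: "(w @ [False]) ! n = False" using w by (simp add: nth_append)
        have tk: "take n (w @ [False]) = w" using w by simp
        show "(f \<circ> face0 i) w = F2 w"
        proof (cases "w ! d")
          case True then show ?thesis using 2 fw wd tk by (simp add: f_def)
        next
          case False
          then have "w[d := False] = w" by (metis list_update_id)
          then show ?thesis using 2 fw wd wn tk False agree[of w] w by (simp add: f_def)
        qed
      qed
    qed
  qed
  have h: "\<forall>i\<in>{d, n}. f \<circ> face0 i \<in> C (Suc n - 1)" using h0 by simp
  obtain W where W: "W \<in> C (Suc n)" "\<forall>u. length u = Suc n \<longrightarrow> (\<exists>i\<in>{d, n}. \<not> u ! i) \<longrightarrow> W u = f u"
    using ext_lemma[OF sub h] by blast
  show ?thesis
  proof (rule cube_mor[OF W(1) mor_snoc_neg[OF d]])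
    fix v :: "bool list" assume v: "length v = n"
    define u where "u = v @ [\<not> v ! d]"
    have lu: "length u = Suc n" using v unfolding u_def by simp
    have ud: "u ! d = v ! d" using v d unfolding u_def by (simp add: nth_append)
    have un: "u ! n = (\<not> v ! d)" using v unfolding u_def by (simp add: nth_append)
    have tk: "take n u = v" using v unfolding u_def by simp
    have "\<exists>i\<in>{d, n}. \<not> u ! i" using ud un by auto
    then have "W u = f u" using W(2) lu by blast
    then show "(if v ! d then F2 v else F1 (v[d := True])) = W (v @ [\<not> v ! d])"
      using ud un tk unfolding u_def[symmetric] by (simp add: f_def)
  qed
qed

lemma glue:
  assumes F1: "F1 \<in> C n" and F2: "F2 \<in> C n" and d: "d < n"
    and agree: "\<And>v. length v = n \<Longrightarrow> v ! d = b \<Longrightarrow> F1 v = F2 v"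
  shows "(\<lambda>v. if v ! d = b then F1 (v[d := \<not> b]) else F2 v) \<in> C n"
proof (cases b)
  case False
  have "(\<lambda>v. if v ! d then F2 v else F1 (v[d := True])) \<in> C n"
    by (rule glue0[OF F1 F2 d]) (use agree False in auto)
  then show ?thesis by (rule cube_cong) (use False in auto)
next
  case True
  define fl where "fl v = v[d := \<not> v ! d]" for v :: "bool list"
  have F1': "F1 \<circ> fl \<in> C n" unfolding fl_def by (rule cube_comp[OF F1 mor_flip[OF d]])
  have F2': "F2 \<circ> fl \<in> C n" unfolding fl_def by (rule cube_comp[OF F2 mor_flip[OF d]])
  have "(\<lambda>v. if v ! d then (F2 \<circ> fl) v else (F1 \<circ> fl) (v[d := True])) \<in> C n"
  proof (rule glue0[OF F1' F2' d])
    fix v :: "bool list" assume "length v = n" "\<not> v ! d"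
    then show "(F1 \<circ> fl) v = (F2 \<circ> fl) v" using agree[of "fl v"] True d by (simp add: fl_def)
  qed
  then show ?thesis
  proof (rule cube_mor[OF _ mor_flip[OF d]])
    fix v :: "bool list" assume lv: "length v = n"
    show "(if v ! d = b then F1 (v[d := \<not> b]) else F2 v) =
      (\<lambda>v. if v ! d then (F2 \<circ> fl) v else (F1 \<circ> fl) (v[d := True])) (v[d := \<not> v ! d])"
    proof (cases "v ! d")
      case False
      then have "v[d := False] = v" by (metis list_update_id)
      then show ?thesis using True d False lv by (simp add: fl_def)
    qed (use True d lv in \<open>simp add: fl_def\<close>)
  qed
qed


lemma transfer:
  "S \<subseteq> {..<n} \<Longrightarrow> e \<in> C n \<Longrightarrow> e' \<in> C n \<Longrightarrow> length v0 = n \<Longrightarrow>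
   (\<And>v. length v = n \<Longrightarrow> v \<noteq> v0 \<Longrightarrow> e' v = e v) \<Longrightarrow>
   (\<And>v w. length v = n \<Longrightarrow> length w = n \<Longrightarrow> (\<forall>i<n. i \<notin> S \<longrightarrow> v ! i = w ! i) \<Longrightarrow> e v = e w) \<Longrightarrow>
   (\<lambda>v. if v = v0 then e' v0 else e v0) \<in> C n"
proof (induction "n - card S" arbitrary: S e e' v0 rule: less_induct)
  case (less S e e' v0)
  show ?case
  proof (cases "S = {..<n}")
    case True
    have ev: "e v = e v0" if lv: "length v = n" for v
      by (rule less.prems(6)[OF lv less.prems(4)]) (use True in simp)
    show ?thesis
    proof (rule cube_cong[OF less.prems(3)])
      fix v :: "bool list" assume lv: "length v = n"
      show "(if v = v0 then e' v0 else e v0) = e' v"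
      proof (cases "v = v0")
        case False
        then have "e' v = e v" using less.prems(5)[OF lv] by simp
        then show ?thesis using False ev[OF lv] by simp
      qed simp
    qed
  next
    case False
    then obtain i where i: "i < n" "i \<notin> S" using less.prems(1) by auto
    have Slt: "card S < n"
    proof -
      have "S \<subset> {..<n}" using less.prems(1) False by blast
      then have "card S < card {..<n}" by (rule psubset_card_mono[rotated]) simp
      then show ?thesis by simp
    qed
    have finS: "finite S" using less.prems(1) finite_subset by blast
    define b0 where "b0 = v0 ! i"
    have v0i: "v0 ! i = b0" by (simp add: b0_def)
    have lv0: "length v0 = n" by (rule less.prems(4))
    define Dl where "Dl = (\<lambda>v. if v ! i = (\<not> b0) then e (v[i := \<not> \<not> b0]) else e' v)"
    have Dc: "Dl \<in> C n" unfolding Dl_def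
    proof (rule glue[OF less.prems(2) less.prems(3) i(1)])
      fix v :: "bool list" assume "length v = n" "v ! i = (\<not> b0)"
      moreover then have "v \<noteq> v0" using v0i by auto
      ultimately show "e v = e' v" using less.prems(5) by simp
    qed
    define E where "E v = e (v[i := b0])" for v
    have Ec: "E \<in> C n" unfolding E_def by (rule cube_mor[OF less.prems(2) mor_upd_const[OF i(1)]]) simp
    define fl where "fl v = v[i := \<not> v ! i]" for v :: "bool list"
    define Db where "Db = Dl \<circ> fl"
    have Dbc: "Db \<in> C n" unfolding Db_def fl_def by (rule cube_comp[OF Dc mor_flip[OF i(1)]])
    define v1 where "v1 = v0[i := \<not> b0]"
    have lv1: "length v1 = n" using lv0 by (simp add: v1_def)
    have m: "n - card (insert i S) < n - card S" using finS i(2) Slt by simp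
    have sub: "insert i S \<subseteq> {..<n}" using less.prems(1) i by auto
    have agree: "\<And>v. length v = n \<Longrightarrow> v \<noteq> v1 \<Longrightarrow> Db v = E v"
    proof -
      fix v :: "bool list" assume lv: "length v = n" and ne: "v \<noteq> v1"
      show "Db v = E v"
      proof (cases "v ! i = b0")
        case True
        have "fl v ! i = (\<not> b0)" using True lv i by (simp add: fl_def)
        then show ?thesis using True lv i by (simp add: Db_def Dl_def E_def fl_def)
      next
        case False
        then have vi: "v ! i = (\<not> b0)" by simp
        have w: "fl v = v[i := b0]" using vi by (simp add: fl_def)
        have "v[i := b0] \<noteq> v0"
        proof
          assume "v[i := b0] = v0"
          then have "(v[i := b0])[i := \<not> b0] = v1" by (simp add: v1_def)
          moreover have "(v[i := b0])[i := \<not> b0] = v" using vi list_update_id[of v i] by simp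
          ultimately show False using ne by simp
        qed
        then have "e' (v[i := b0]) = e (v[i := b0])" using less.prems(5) lv by simp
        moreover have "fl v ! i = b0" using w lv i by simp
        ultimately show ?thesis using w by (simp add: Db_def Dl_def E_def)
      qed
    qed
    have dep: "\<And>v w. length v = n \<Longrightarrow> length w = n \<Longrightarrow> (\<forall>j<n. j \<notin> insert i S \<longrightarrow> v ! j = w ! j) \<Longrightarrow> E v = E w"
    proof -
      fix v w :: "bool list" assume lv: "length v = n" and lw: "length w = n"
        and h: "\<forall>j<n. j \<notin> insert i S \<longrightarrow> v ! j = w ! j"
      have "\<forall>j<n. j \<notin> S \<longrightarrow> v[i := b0] ! j = w[i := b0] ! j"
      proof (intro allI impI)
        fix j assume j: "j < n" "j \<notin> S"
        show "v[i := b0] ! j = w[i := b0] ! j"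
        proof (cases "j = i")
          case True then show ?thesis using lv lw i by simp
        next
          case False then show ?thesis using h j by simp
        qed
      qed
      then show "E v = E w" unfolding E_def using less.prems(6)[of "v[i := b0]" "w[i := b0]"] lv lw by simp
    qed
    have G1: "(\<lambda>v. if v = v1 then Db v1 else E v1) \<in> C n"
      by (rule less.hyps[OF m sub Ec Dbc lv1 agree dep])
    have Dbv1: "Db v1 = e' v0"
    proof -
      have "fl v1 = v0" using lv0 i v0i list_update_id[of v0 i] by (simp add: fl_def v1_def)
      then show ?thesis using v0i by (simp add: Db_def Dl_def)
    qed
    have Ev1: "E v1 = e v0"
    proof -
      have "v1[i := b0] = v0" using v0i list_update_id[of v0 i] by (simp add: v1_def)
      then show ?thesis by (simp add: E_def)
    qed
    define G where "G = (\<lambda>v. if v = v1 then e' v0 else e v0)"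
    have Gc: "G \<in> C n" using G1 unfolding G_def Dbv1 Ev1 .
    have T: "(\<lambda>v. if v ! i = b0 then G (v[i := \<not> b0]) else (\<lambda>v. e v0) v) \<in> C n"
    proof (rule glue[OF Gc cube_const i(1)])
      fix v :: "bool list" assume "length v = n" "v ! i = b0"
      moreover have "v1 ! i = (\<not> b0)" using lv0 i by (simp add: v1_def)
      ultimately show "G v = e v0" unfolding G_def by auto
    qed
    show ?thesis
    proof (rule cube_cong[OF T])
      fix v :: "bool list" assume lv: "length v = n"
      show "(if v = v0 then e' v0 else e v0) = (if v ! i = b0 then G (v[i := \<not> b0]) else e v0)"
      proof (cases "v ! i = b0")
        case True
        have "(v[i := \<not> b0] = v1) \<longleftrightarrow> (v = v0)"
        proof
          assume "v[i := \<not> b0] = v1"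
          then have "(v[i := \<not> b0])[i := b0] = v1[i := b0]" by simp
          moreover have "(v[i := \<not> b0])[i := b0] = v" using True list_update_id[of v i] by simp
          moreover have "v1[i := b0] = v0" using v0i list_update_id[of v0 i] by (simp add: v1_def)
          ultimately show "v = v0" by simp
        qed (simp add: v1_def)
        then show ?thesis using True unfolding G_def by auto
      next
        case False
        then have "v \<noteq> v0" using v0i by auto
        then show ?thesis using False by simp
      qed
    qed
  qed
qed


lemma rep_nth: "i < n \<Longrightarrow> replicate n True ! i"
  by simp

lemma all_upd_k: "i0 = k \<Longrightarrow> (\<forall>i<k. \<not> (v[i0 := x]) ! i) = (\<forall>i<k. \<not> v ! i)"
  by auto

lemma zsym: assumes "zpair_rel C k p q" shows "zpair_rel C k q p"
  unfolding zpair_rel_def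
proof (rule cube_mor[OF assms[unfolded zpair_rel_def] mor_flip[of k "k + 1"]])
  fix v :: "bool list" assume lv: "length v = k + 1"
  then show "(if v ! k then if \<forall>i<k. \<not> v ! i then snd p else fst p else if \<forall>i<k. \<not> v ! i then snd q else fst q) =
    (\<lambda>v. if v ! k then if \<forall>i<k. \<not> v ! i then snd q else fst q else if \<forall>i<k. \<not> v ! i then snd p else fst p) (v[k := \<not> v ! k])"
    by (simp add: all_upd_k)
qed simp

lemma ztrans: assumes ab: "zpair_rel C k a b" and bc: "zpair_rel C k b c" shows "zpair_rel C k a c"
proof -
  define Zab where "Zab = (\<lambda>v. if v ! k then (if \<forall>i<k. \<not> v ! i then snd b else fst b)
          else (if \<forall>i<k. \<not> v ! i then snd a else fst a))"
  define Zbc where "Zbc = (\<lambda>v. if v ! k then (if \<forall>i<k. \<not> v ! i then snd c else fst c)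
          else (if \<forall>i<k. \<not> v ! i then snd b else fst b))"
  have Zab: "Zab \<in> C (k + 1)" using ab unfolding zpair_rel_def Zab_def .
  have Zbc: "Zbc \<in> C (k + 1)" using bc unfolding zpair_rel_def Zbc_def .
  define fl where "fl v = v[k := \<not> v ! k]" for v :: "bool list"
  have Zbar: "Zab \<circ> fl \<in> C (k + 1)" unfolding fl_def by (rule cube_comp[OF Zab mor_flip]) simp
  have T: "(\<lambda>v. if v ! k = False then (Zab \<circ> fl) (v[k := \<not> False]) else Zbc v) \<in> C (k + 1)"
  proof (rule glue[OF Zbar Zbc])
    show "k < k + 1" by simp
    fix v :: "bool list" assume "length v = k + 1" "v ! k = False"
    then show "(Zab \<circ> fl) v = Zbc v" by (simp add: Zab_def Zbc_def fl_def all_upd_k)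
  qed
  show ?thesis unfolding zpair_rel_def
  proof (rule cube_cong[OF T])
    fix v :: "bool list" assume "length v = k + 1"
    then show "(if v ! k then if \<forall>i<k. \<not> v ! i then snd c else fst c else if \<forall>i<k. \<not> v ! i then snd a else fst a) =
      (if v ! k = False then (Zab \<circ> fl) (v[k := \<not> False]) else Zbc v)"
      by (simp add: Zab_def Zbc_def fl_def all_upd_k)
  qed
qed

lemma zuniq:
  assumes ks: "is_k_step k C" and z1: "zpair_rel C k p (y, w1)" and z2: "zpair_rel C k p (y, w2)"
  shows "w1 = w2"
proof -
  define \<rho> where "\<rho> v = map Not (take k v) @ [v ! k]" for v :: "bool list"
  define Z where "Z w = (\<lambda>v. if v ! k then (if \<forall>i<k. \<not> v ! i then w else y)
          else (if \<forall>i<k. \<not> v ! i then snd p else fst p))" for w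
  have Zc: "Z w1 \<in> C (k + 1)" "Z w2 \<in> C (k + 1)" using z1 z2 unfolding zpair_rel_def Z_def snd_conv fst_conv by simp_all
  have mr: "cube_morphism (k + 1) (k + 1) \<rho>" unfolding \<rho>_def using mor_rho[of k] by simp
  have c1: "Z w1 \<circ> \<rho> \<in> C (k + 1)" by (rule cube_comp[OF Zc(1) mr])
  have c2: "Z w2 \<circ> \<rho> \<in> C (k + 1)" by (rule cube_comp[OF Zc(2) mr])
  have rk: "\<rho> v ! k = v ! k" if "length v = k + 1" for v using that by (simp add: \<rho>_def nth_append)
  have ri: "(\<forall>i<k. \<not> \<rho> v ! i) = (\<forall>i<k. v ! i)" if "length v = k + 1" for v
    using that by (auto simp: \<rho>_def nth_append)
  have ev: "(Z w \<circ> \<rho>) v = (if v ! k then (if \<forall>i<k. v ! i then w else y)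
          else (if \<forall>i<k. v ! i then snd p else fst p))" if "length v = k + 1" for v w
    using rk[OF that] ri[OF that] by (simp add: Z_def)
  have ag: "\<forall>v\<in>vertices (k + 1). v \<noteq> replicate (k + 1) True \<longrightarrow> (Z w1 \<circ> \<rho>) v = (Z w2 \<circ> \<rho>) v"
  proof (intro ballI impI)
    fix v assume v: "v \<in> vertices (k + 1)" "v \<noteq> replicate (k + 1) True"
    then have lv: "length v = k + 1" by simp
    have "\<not> (v ! k \<and> (\<forall>i<k. v ! i))"
    proof
      assume h: "v ! k \<and> (\<forall>i<k. v ! i)"
      have "v = replicate (k + 1) True"
      proof (rule replicate_eqI)
        show "length v = k + 1" by (rule lv)
        fix x assume "x \<in> set v"
        then obtain i where i: "i < length v" "v ! i = x" by (auto simp: in_set_conv_nth)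
        then have "i < k \<or> i = k" using lv by auto
        then show "x = True" using h i by auto
      qed
      then show False using v(2) by simp
    qed
    then show "(Z w1 \<circ> \<rho>) v = (Z w2 \<circ> \<rho>) v" using ev[OF lv, of w1] ev[OF lv, of w2] by auto
  qed
  define top where "top = replicate (k + 1) True"
  have ltop: "length top = k + 1" by (simp add: top_def)
  have tk: "top ! k" unfolding top_def by (rule rep_nth) simp
  have ti: "\<forall>i<k. top ! i" unfolding top_def by (intro allI impI rep_nth) simp
  have "(Z w1 \<circ> \<rho>) top = (Z w2 \<circ> \<rho>) top"
    using ks c1 c2 ag unfolding is_k_step_def top_def by blast
  moreover have "(Z w1 \<circ> \<rho>) top = w1" using ev[OF ltop, of w1] tk ti by simp
  moreover have "(Z w2 \<circ> \<rho>) top = w2" using ev[OF ltop, of w2] tk ti by simp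
  ultimately show ?thesis by simp
qed

lemma zrefl:
  assumes "char_rel C (k - 1) y y'"
  shows "zpair_rel C k (y, y') (y, y')"
proof (cases "k = 0")
  case True then show ?thesis unfolding zpair_rel_def by (simp add: cube_C1[simplified])
next
  case False
  then have kk: "k - 1 + 1 = k" by simp
  obtain c c' where cc: "c \<in> C k" "c' \<in> C k" "c (replicate k False) = y" "c' (replicate k False) = y'"
    "\<forall>v\<in>vertices k. v \<noteq> replicate k False \<longrightarrow> c v = c' v"
    using assms unfolding char_rel_def kk by blast
  have G: "(\<lambda>v. if v = replicate k False then c' (replicate k False) else c (replicate k False)) \<in> C k"
  proof (rule transfer[of "{}" k c c' "replicate k False"])
    show "{} \<subseteq> {..<k}" "c \<in> C k" "c' \<in> C k" "length (replicate k False) = k" using cc by auto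
    show "\<And>v. length v = k \<Longrightarrow> v \<noteq> replicate k False \<Longrightarrow> c' v = c v" using cc(5) by simp
    fix v w :: "bool list" assume "length v = k" "length w = k" "\<forall>i<k. i \<notin> {} \<longrightarrow> v ! i = w ! i"
    then have "v = w" by (simp add: nth_equalityI)
    then show "c v = c w" by simp
  qed
  show ?thesis unfolding zpair_rel_def
  proof (rule cube_mor[OF G mor_take[of k "k + 1"]])
    fix v :: "bool list" assume lv: "length v = k + 1"
    have eqv: "(take k v = replicate k False) = (\<forall>i<k. \<not> v ! i)"
    proof
      assume "take k v = replicate k False"
      then show "\<forall>i<k. \<not> v ! i" using lv by (metis nth_replicate nth_take)
    next
      assume "\<forall>i<k. \<not> v ! i"
      then show "take k v = replicate k False" using lv by (intro nth_equalityI) auto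
    qed
    then show "(if v ! k then if \<forall>i<k. \<not> v ! i then snd (y, y') else fst (y, y') else if \<forall>i<k. \<not> v ! i then snd (y, y') else fst (y, y')) =
      (\<lambda>v. if v = replicate k False then c' (replicate k False) else c (replicate k False)) (take k v)"
      by (simp only: snd_conv fst_conv cc(3) cc(4) eqv if_cancel)
  qed simp
qed

end

lemma zmap:
  assumes m: "nil_morphism CX CY \<psi>" and z: "zpair_rel CX k p q"
  shows "zpair_rel CY k (map_prod \<psi> \<psi> p) (map_prod \<psi> \<psi> q)"
proof -
  have "\<forall>n c. c \<in> CX n \<longrightarrow> \<psi> \<circ> c \<in> CY n" using m unfolding nil_morphism_def by blast
  then have "\<psi> \<circ> (\<lambda>v. if v ! k then (if \<forall>i<k. \<not> v ! i then snd q else fst q)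
          else (if \<forall>i<k. \<not> v ! i then snd p else fst p)) \<in> CY (k + 1)"
    using z unfolding zpair_rel_def by blast
  moreover have "\<psi> \<circ> (\<lambda>v. if v ! k then (if \<forall>i<k. \<not> v ! i then snd q else fst q)
          else (if \<forall>i<k. \<not> v ! i then snd p else fst p)) =
     (\<lambda>v. if v ! k then (if \<forall>i<k. \<not> v ! i then snd (map_prod \<psi> \<psi> q) else fst (map_prod \<psi> \<psi> q))
          else (if \<forall>i<k. \<not> v ! i then snd (map_prod \<psi> \<psi> p) else fst (map_prod \<psi> \<psi> p)))"
    unfolding comp_def
  proof (rule ext)
    fix v :: "bool list"
    show "\<psi> (if v ! k then if \<forall>i<k. \<not> v ! i then snd q else fst q else if \<forall>i<k. \<not> v ! i then snd p else fst p) =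
         (if v ! k then if \<forall>i<k. \<not> v ! i then snd (map_prod \<psi> \<psi> q) else fst (map_prod \<psi> \<psi> q)
          else if \<forall>i<k. \<not> v ! i then snd (map_prod \<psi> \<psi> p) else fst (map_prod \<psi> \<psi> p))"
      by (cases "v ! k"; cases "\<forall>i<k. \<not> v ! i"; cases p; cases q; auto)
  qed
  ultimately show ?thesis unfolding zpair_rel_def by simp
qed


theorem mainTheorem12:
  fixes CX :: "('a::metric_space) cubes" and CY :: "('b::metric_space) cubes"
    and CY' :: "('c::metric_space) cubes"
    and k :: nat and \<psi> :: "'a \<Rightarrow> 'b" and R :: "'a \<Rightarrow> 'c" and x y :: 'a
  assumes "is_compact_nilspace CX" and "is_k_step k CX"
    and "is_compact_nilspace CY" and "is_compact_nilspace CY'"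
    and "fibration CX CY \<psi>" and "fibration CX CY' R"
    and "\<forall>a b. R a = R b \<longrightarrow> \<psi> a = \<psi> b"
    and "Delta \<psi> (induced_map CX CY' (k - 1) R \<circ> char_proj CX (k - 1)) x
       = Delta \<psi> (induced_map CX CY' (k - 1) R \<circ> char_proj CX (k - 1)) y"
  shows "\<exists>z\<in>struct_kernel CX CY k \<psi>. R x = R (struct_act CX k z y)"
proof -
  have nilX: "is_nilspace CX" using assms(1) unfolding is_compact_nilspace_def by blast
  have nilY: "is_nilspace CY" using assms(3) unfolding is_compact_nilspace_def by blast
  have psixy: "\<psi> x = \<psi> y"
    and ind: "induced_map CX CY' (k - 1) R (char_proj CX (k - 1) x) = induced_map CX CY' (k - 1) R (char_proj CX (k - 1) y)"
    using assms(8) unfolding Delta_def by auto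
  have fibR: "\<And>m a. R ` char_proj CX m a = char_proj CY' m (R a)"
    using assms(6) unfolding fibration_def by blast
  have indR: "induced_map CX CY' m R (char_proj CX m a) = R ` char_proj CX m a" for m a
  proof -
    define a' where "a' = (SOME a'. char_proj CX m a' = char_proj CX m a)"
    have aa: "char_proj CX m a' = char_proj CX m a" unfolding a'_def by (rule someI[of _ a]) simp
    have "induced_map CX CY' m R (char_proj CX m a) = char_proj CY' m (R a')"
      unfolding induced_map_def a'_def ..
    also have "\<dots> = R ` char_proj CX m a'" using fibR by simp
    also have "\<dots> = R ` char_proj CX m a" using aa by simp
    finally show ?thesis .
  qed
  have crefl: "char_rel CX m t t" for m t
    unfolding char_rel_def
    by (rule bexI[OF _ cube_const[OF nilX, of t "m + 1"]], rule bexI[OF _ cube_const[OF nilX, of t "m + 1"]]) simp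
  have "R x \<in> R ` char_proj CX (k - 1) x" using crefl by (simp add: char_proj_def)
  also have "\<dots> = R ` char_proj CX (k - 1) y" using ind indR by simp
  finally obtain y' where y': "char_rel CX (k - 1) y y'" "R y' = R x"
    unfolding char_proj_def by auto
  have psiy': "\<psi> y' = \<psi> y" using assms(7) y'(2) psixy by metis
  define z where "z = struct_class CX k (y, y')"
  have zr: "zpair_rel CX k (y, y') (y, y')" by (rule zrefl[OF nilX y'(1)])
  have yy'in: "(y, y') \<in> struct_pairs CX k" using y'(1) by (simp add: struct_pairs_def)
  have yz: "(y, y') \<in> z" using zr yy'in by (simp add: z_def struct_class_def)
  have zG: "z \<in> struct_group CX k" unfolding struct_group_def z_def using yy'in by blast
  have act: "struct_act CX k z y = y'"
    unfolding struct_act_def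
  proof (rule the_equality)
    show "\<exists>p\<in>z. zpair_rel CX k p (y, y')" using yz zr by blast
  next
    fix w assume "\<exists>p\<in>z. zpair_rel CX k p (y, w)"
    then obtain p where p: "p \<in> z" "zpair_rel CX k p (y, w)" by blast
    have "zpair_rel CX k (y, y') p" using p(1) by (simp add: z_def struct_class_def)
    then have "zpair_rel CX k (y, y') (y, w)" using ztrans[OF nilX _ p(2)] by blast
    then show "w = y'" by (rule zuniq[OF nilX assms(2) _ zr])
  qed
  have mor: "nil_morphism CX CY \<psi>" using assms(5) unfolding fibration_def by blast
  define p where "p = (SOME p. p \<in> z)"
  have pz: "p \<in> z" unfolding p_def using yz by (rule someI)
  have zp: "zpair_rel CX k (y, y') p" using pz by (simp add: z_def struct_class_def)
  have zpY: "zpair_rel CY k (\<psi> y, \<psi> y) (map_prod \<psi> \<psi> p)" using zmap[OF mor zp] psiy' by simp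
  have cls: "struct_class CY k (map_prod \<psi> \<psi> p) = struct_class CY k (\<psi> y, \<psi> y)"
  proof (rule set_eqI)
    fix q
    have "zpair_rel CY k (map_prod \<psi> \<psi> p) q \<longleftrightarrow> zpair_rel CY k (\<psi> y, \<psi> y) q"
    proof
      assume "zpair_rel CY k (map_prod \<psi> \<psi> p) q"
      then show "zpair_rel CY k (\<psi> y, \<psi> y) q" by (rule ztrans[OF nilY zpY])
    next
      assume "zpair_rel CY k (\<psi> y, \<psi> y) q"
      then show "zpair_rel CY k (map_prod \<psi> \<psi> p) q" by (rule ztrans[OF nilY zsym[OF nilY zpY]])
    qed
    then show "q \<in> struct_class CY k (map_prod \<psi> \<psi> p) \<longleftrightarrow> q \<in> struct_class CY k (\<psi> y, \<psi> y)"
      by (simp add: struct_class_def)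
  qed
  have "struct_morphism CX CY k \<psi> z = struct_class CY k (\<psi> y, \<psi> y)"
    unfolding struct_morphism_def p_def[symmetric] by (rule cls)
  then have "z \<in> struct_kernel CX CY k \<psi>" using zG unfolding struct_kernel_def by blast
  moreover have "R x = R (struct_act CX k z y)" using act y'(2) by simp
  ultimately show ?thesis by (rule bexI[rotated])
qed

end
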